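(* Let $G$ be a group with identity $e$, $A$ a finite set with $|A|\ge2$, $S\subseteq G$ finite with $e\in S$. Let $\mathcal P\subseteq A^S$, and let $f:\mathcal P\to A$ and $g:\mathcal P^c\to A$ be well-behaved functions such that $(\mathcal P,f)$ generates a local map $\mu:A^S\to A$ and $(\mathcal P^c,g)$ generates a local map $\mu':A^S\to A$. (1) An element $s\in S\setminus\{e\}$ is essential for $\mu$ if and only if it is essential for $\mu'$. (2) If $A=\{0,1\}$, then $\mathrm{mms}(\mu)=\mathrm{mms}(\mu')$.
   Context: $A^S$ is the set of functions $S\to A$; $\mathcal P^c=A^S\setminus\mathcal P$. For $s\in S$, $\mathrm{Res}_s(z)=z|_{S\setminus\{s\}}$. An element $s\in S$ is essential for $\mu$ if there exist $z,w\in A^S$ with $\mathrm{Res}_s(z)=\mathrm{Res}_s(w)$ but $\mu(z)\neq\mu(w)$. A pair $(\mathcal Q,h)$ generates $\mu$ if $\mathcal Q=\{z\in A^S:\mu(z)\neq z(e)\}$ and $h:\mathcal Q\to A$ is the restriction of $\mu$ to $\mathcal Q$. A function $h:\mathcal Q\to A$ is well-behaved if for all $p,q\in\mathcal Q$: $p(e)=q(e)$ iff $h(p)=h(q)$. A local map $\nu:A^S\to A$ defines the cellular automaton $\tau:A^G\to A^G$, $\tau(x)(g)=\nu((g^{-1}\cdot x)|_S)$, where $(g\cdot x)(h)=x(g^{-1}h)$; a finite $T\subseteq G$ is a memory set of $\tau$ if some local map $A^T\to A$ defines $\tau$; $\mathrm{mms}(\nu)$ is the intersection of all memory sets of the cellular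 automaton defined by $\nu$, and it equals the set of elements of $S$ essential for $\nu$. *)

theory Defs
  imports Main "HOL-Library.FuncSet"
begin

text \<open>The group G is the type 'g (class group_add, written additively but not
necessarily commutative: identity 0, product g + h, inverse - g).
A^S is the extensional function space PiE S (K A).\<close>

definition Res :: "'g set \<Rightarrow> 'g \<Rightarrow> ('g \<Rightarrow> 'a) \<Rightarrow> ('g \<Rightarrow> 'a)" where
  "Res S s z = restrict z (S - {s})"

definition essential :: "'a set \<Rightarrow> 'g set \<Rightarrow> (('g \<Rightarrow> 'a) \<Rightarrow> 'a) \<Rightarrow> 'g \<Rightarrow> bool" where
  "essential A S \<mu> s \<longleftrightarrow> s \<in> S \<and>
     (\<exists>z \<in> S \<rightarrow>\<^sub>E A. \<exists>w \<in> S \<rightarrow>\<^sub>E A. Res S s z = Res S s w \<and> \<mu> z \<noteq> \<mu> w)"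

definition generates :: "'a set \<Rightarrow> 'g::group_add set \<Rightarrow> ('g \<Rightarrow> 'a) set \<Rightarrow> (('g \<Rightarrow> 'a) \<Rightarrow> 'a)
     \<Rightarrow> (('g \<Rightarrow> 'a) \<Rightarrow> 'a) \<Rightarrow> bool" where
  "generates A S Q h \<mu> \<longleftrightarrow> Q = {z \<in> S \<rightarrow>\<^sub>E A. \<mu> z \<noteq> z 0} \<and> (\<forall>z \<in> Q. h z = \<mu> z)"

definition well_behaved :: "('g::group_add \<Rightarrow> 'a) set \<Rightarrow> (('g \<Rightarrow> 'a) \<Rightarrow> 'a) \<Rightarrow> bool" where
  "well_behaved Q h \<longleftrightarrow> (\<forall>p \<in> Q. \<forall>q \<in> Q. p 0 = q 0 \<longleftrightarrow> h p = h q)"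

text \<open>Cellular automaton defined by local map \<nu> with memory set S:
  tau(x)(g) = \<nu>((g^-1 . x)|_S), and (g^-1 . x)(h) = x(g h).\<close>
definition CA :: "'g::group_add set \<Rightarrow> (('g \<Rightarrow> 'a) \<Rightarrow> 'a) \<Rightarrow> ('g \<Rightarrow> 'a) \<Rightarrow> ('g \<Rightarrow> 'a)" where
  "CA S \<nu> x = (\<lambda>g. \<nu> (restrict (\<lambda>h. x (g + h)) S))"

definition is_memory_set :: "'a set \<Rightarrow> 'g::group_add set \<Rightarrow> (('g \<Rightarrow> 'a) \<Rightarrow> 'a) \<Rightarrow> 'g set \<Rightarrow> bool" where
  "is_memory_set A S \<nu> T \<longleftrightarrow> finite T \<and>
     (\<exists>\<nu>'. \<nu>' \<in> (T \<rightarrow>\<^sub>E A) \<rightarrow> A \<and> (\<forall>x \<in> (UNIV::'g set) \<rightarrow> A. CA T \<nu>' x = CA S \<nu> x))"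

definition mms :: "'a set \<Rightarrow> 'g::group_add set \<Rightarrow> (('g \<Rightarrow> 'a) \<Rightarrow> 'a) \<Rightarrow> 'g set" where
  "mms A S \<nu> = \<Inter> {T. is_memory_set A S \<nu> T}"

end

theory Submission
  imports Defs
begin

lemma key:
  assumes gen: "generates A S Q h \<mu>" and wb: "well_behaved Q h"
    and z: "z \<in> S \<rightarrow>\<^sub>E A" and w: "w \<in> S \<rightarrow>\<^sub>E A" and e: "z 0 = w 0"
  shows "\<mu> z \<noteq> \<mu> w \<longleftrightarrow> (z \<in> Q) \<noteq> (w \<in> Q)"
proof -
  have Q: "Q = {z \<in> S \<rightarrow>\<^sub>E A. \<mu> z \<noteq> z 0}" and hQ: "\<forall>z\<in>Q. h z = \<mu> z"
    using gen unfolding generates_def by auto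
  have wb': "\<forall>p\<in>Q. \<forall>q\<in>Q. p 0 = q 0 \<longleftrightarrow> h p = h q" using wb unfolding well_behaved_def .
  show ?thesis
  proof (cases "z \<in> Q"; cases "w \<in> Q")
    assume "z \<in> Q" "w \<in> Q" thus ?thesis using wb' hQ e by metis
  next
    assume "z \<in> Q" "w \<notin> Q" thus ?thesis using Q z w e by auto
  next
    assume "z \<notin> Q" "w \<in> Q" thus ?thesis using Q z w e by auto
  next
    assume "z \<notin> Q" "w \<notin> Q" thus ?thesis using Q z w e by auto
  qed
qed

lemma res0:
  assumes "Res S s z = Res S s w" "s \<noteq> 0" "0 \<in> S"
  shows "z 0 = w 0"
proof -
  have "Res S s z 0 = Res S s w 0" using assms(1) by simp
  thus ?thesis using assms(2,3) unfolding Res_def by simp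
qed

theorem mainTheorem7:
  fixes A :: "'a set" and S :: "'g::group_add set"
    and P :: "('g \<Rightarrow> 'a) set" and f g \<mu> \<mu>' :: "('g \<Rightarrow> 'a) \<Rightarrow> 'a"
  assumes "finite A" and "card A \<ge> 2"
    and "finite S" and "0 \<in> S"
    and "P \<subseteq> S \<rightarrow>\<^sub>E A"
    and "f \<in> P \<rightarrow> A" and "g \<in> ((S \<rightarrow>\<^sub>E A) - P) \<rightarrow> A"
    and "well_behaved P f" and "well_behaved ((S \<rightarrow>\<^sub>E A) - P) g"
    and "\<mu> \<in> (S \<rightarrow>\<^sub>E A) \<rightarrow> A" and "\<mu>' \<in> (S \<rightarrow>\<^sub>E A) \<rightarrow> A"
    and "generates A S P f \<mu>"
    and "generates A S ((S \<rightarrow>\<^sub>E A) - P) g \<mu>'"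
  shows "(\<forall>s \<in> S - {0}. essential A S \<mu> s \<longleftrightarrow> essential A S \<mu>' s)
       \<and> (card A = 2 \<longrightarrow> mms A S \<mu> = mms A S \<mu>')"
proof
  show "\<forall>s \<in> S - {0}. essential A S \<mu> s \<longleftrightarrow> essential A S \<mu>' s"
  proof
    fix s assume s: "s \<in> S - {0}"
    have eq: "\<mu> z \<noteq> \<mu> w \<longleftrightarrow> \<mu>' z \<noteq> \<mu>' w"
      if z: "z \<in> S \<rightarrow>\<^sub>E A" and w: "w \<in> S \<rightarrow>\<^sub>E A" and r: "Res S s z = Res S s w" for z w
    proof -
      have e: "z 0 = w 0" using res0[OF r] s assms(4) by auto
      have 1: "\<mu> z \<noteq> \<mu> w \<longleftrightarrow> (z \<in> P) \<noteq> (w \<in> P)"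
        using key[OF assms(12) assms(8) z w e] .
      have 2: "\<mu>' z \<noteq> \<mu>' w \<longleftrightarrow> (z \<in> (S \<rightarrow>\<^sub>E A) - P) \<noteq> (w \<in> (S \<rightarrow>\<^sub>E A) - P)"
        using key[OF assms(13) assms(9) z w e] .
      show ?thesis using 1 2 z w by auto
    qed
    show "essential A S \<mu> s \<longleftrightarrow> essential A S \<mu>' s"
      unfolding essential_def using eq by blast
  qed
next
  show "card A = 2 \<longrightarrow> mms A S \<mu> = mms A S \<mu>'"
  proof
    assume "card A = 2"
    then obtain a b where ab: "A = {a, b}" "a \<noteq> b" by (meson card_2_iff)
    define \<sigma> where "\<sigma> x = (if x = a then b else a)" for x
    have sA: "\<sigma> x \<in> A" if "x \<in> A" for x using that ab unfolding \<sigma>_def by auto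
    have ss: "\<sigma> (\<sigma> x) = x" if "x \<in> A" for x using that ab unfolding \<sigma>_def by auto
    have sy: "y = \<sigma> x" if "x \<in> A" "y \<in> A" "y \<noteq> x" for x y
      using that ab unfolding \<sigma>_def by auto
    have P: "P = {z \<in> S \<rightarrow>\<^sub>E A. \<mu> z \<noteq> z 0}" using assms(12) unfolding generates_def by auto
    have Pc: "(S \<rightarrow>\<^sub>E A) - P = {z \<in> S \<rightarrow>\<^sub>E A. \<mu>' z \<noteq> z 0}"
      using assms(13) unfolding generates_def by auto
    have mm: "\<mu>' z = \<sigma> (\<mu> z)" if z: "z \<in> S \<rightarrow>\<^sub>E A" for z
    proof -
      have z0: "z 0 \<in> A" using z assms(4) by auto
      have m: "\<mu> z \<in> A" "\<mu>' z \<in> A" using z assms(10,11) by auto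
      show ?thesis
      proof (cases "z \<in> P")
        case True
        hence "\<mu> z \<noteq> z 0" "\<mu>' z = z 0" using P Pc z by auto
        thus ?thesis using sy[OF z0 m(1)] ss z0 by auto
      next
        case False
        hence "\<mu> z = z 0" "\<mu>' z \<noteq> z 0" using P Pc z by auto
        thus ?thesis using sy[OF z0 m(2)] by auto
      qed
    qed
    have mm2: "\<mu> z = \<sigma> (\<mu>' z)" if z: "z \<in> S \<rightarrow>\<^sub>E A" for z
    proof -
      have "\<mu> z \<in> A" using z assms(10) by auto
      thus ?thesis using mm[OF z] ss by metis
    qed
    have rA: "restrict (\<lambda>h. x (g' + h)) S \<in> S \<rightarrow>\<^sub>E A" if "x \<in> UNIV \<rightarrow> A" for x :: "'g \<Rightarrow> 'a" and g'
      using that by auto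
    have transfer: "is_memory_set A S m2 T"
      if T: "is_memory_set A S m1 T" and rel: "\<And>z. z \<in> S \<rightarrow>\<^sub>E A \<Longrightarrow> m2 z = \<sigma> (m1 z)"
      for m1 m2 T
    proof -
      from T obtain \<nu> where fin: "finite T" and \<nu>: "\<nu> \<in> (T \<rightarrow>\<^sub>E A) \<rightarrow> A"
        and ca: "\<forall>x \<in> (UNIV::'g set) \<rightarrow> A. CA T \<nu> x = CA S m1 x"
        unfolding is_memory_set_def by blast
      have "\<sigma> \<circ> \<nu> \<in> (T \<rightarrow>\<^sub>E A) \<rightarrow> A" using \<nu> sA by (auto simp: Pi_iff)
      moreover have "\<forall>x \<in> (UNIV::'g set) \<rightarrow> A. CA T (\<sigma> \<circ> \<nu>) x = CA S m2 x"
      proof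
        fix x :: "'g \<Rightarrow> 'a" assume x: "x \<in> UNIV \<rightarrow> A"
        show "CA T (\<sigma> \<circ> \<nu>) x = CA S m2 x"
        proof
          fix g' :: 'g
          have "CA T \<nu> x g' = CA S m1 x g'" using ca x by simp
          thus "CA T (\<sigma> \<circ> \<nu>) x g' = CA S m2 x g'"
            using rel[OF rA[OF x, of g']] unfolding CA_def by simp
        qed
      qed
      ultimately show ?thesis using fin unfolding is_memory_set_def by blast
    qed
    have "{T. is_memory_set A S \<mu> T} = {T. is_memory_set A S \<mu>' T}"
      using transfer mm mm2 by blast
    thus "mms A S \<mu> = mms A S \<mu>'" unfolding mms_def by simp
  qed
qed

end
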